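(* Let $\mathbb{Q}=\mathbb{Q}_1\cup\mathbb{Q}_2$ be a partition of the rationals into two disjoint dense sets, and let $f(x)=0$ for $x\in\mathbb{R}\setminus\mathbb{Q}$, $f(x)=1$ for $x\in\mathbb{Q}_1$, $f(x)=2$ for $x\in\mathbb{Q}_2$. Then $f$ has the Baire property, but $f$ is not the pointwise limit of any sequence of Świątkowski functions. Consequently, the class of pointwise limits of sequences of Świątkowski functions is strictly smaller than the class of functions with the Baire property.
   Context: $\mathrm{C}(f)$ denotes the set of continuity points of $f$. $f$ is a Świątkowski function if for all $a<b$ with $f(a)\ne f(b)$ there is $x\in(a,b)\cap\mathrm{C}(f)$ with $f(x)$ strictly between $f(a)$ and $f(b)$. A function has the Baire property if preimages of open sets are of the form $O\triangle M$ with $O$ open and $M$ meager. *)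

theory Defs
  imports "HOL-Analysis.Analysis"
begin

definition nowhere_dense :: "real set \<Rightarrow> bool" where
  "nowhere_dense A \<longleftrightarrow> interior (closure A) = {}"

definition meager :: "real set \<Rightarrow> bool" where
  "meager M \<longleftrightarrow> (\<exists>N :: nat \<Rightarrow> real set. (\<forall>n. nowhere_dense (N n)) \<and> M \<subseteq> (\<Union>n. N n))"

definition has_baire_property :: "(real \<Rightarrow> real) \<Rightarrow> bool" where
  "has_baire_property f \<longleftrightarrow>
     (\<forall>V. open V \<longrightarrow> (\<exists>U M. open U \<and> meager M \<and> f -` V = (U - M) \<union> (M - U)))"

definition continuity_points :: "(real \<Rightarrow> real) \<Rightarrow> real set" where
  "continuity_points f = {x. isCont f x}"

definition swiatkowski :: "(real \<Rightarrow> real) \<Rightarrow> bool" where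
  "swiatkowski f \<longleftrightarrow>
     (\<forall>a b. a < b \<and> f a \<noteq> f b \<longrightarrow>
        (\<exists>x \<in> {a<..<b} \<inter> continuity_points f.
            min (f a) (f b) < f x \<and> f x < max (f a) (f b)))"

definition pointwise_limit_of_swiatkowski :: "(real \<Rightarrow> real) \<Rightarrow> bool" where
  "pointwise_limit_of_swiatkowski f \<longleftrightarrow>
     (\<exists>g :: nat \<Rightarrow> real \<Rightarrow> real. (\<forall>n. swiatkowski (g n)) \<and>
        (\<forall>x. (\<lambda>n. g n x) \<longlonglongrightarrow> f x))"

end

theory Submission
  imports Defs
begin

lemma nd_subset: "A \<subseteq> B \<Longrightarrow> nowhere_dense B \<Longrightarrow> nowhere_dense A"
  unfolding nowhere_dense_def
  by (metis closure_mono interior_mono subset_empty)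

lemma meager_subset: "A \<subseteq> B \<Longrightarrow> meager B \<Longrightarrow> meager A"
  unfolding meager_def by blast

lemma meager_Union:
  assumes "\<And>n::nat. meager (M n)"
  shows "meager (\<Union>n. M n)"
proof -
  have "\<forall>n. \<exists>N::nat\<Rightarrow>real set. (\<forall>k. nowhere_dense (N k)) \<and> M n \<subseteq> (\<Union>k. N k)"
    using assms unfolding meager_def by blast
  from choice[OF this] obtain N :: "nat \<Rightarrow> nat \<Rightarrow> real set" where N0: "\<forall>n. (\<forall>k. nowhere_dense (N n k)) \<and> M n \<subseteq> (\<Union>k. N n k)"
    by (elim exE) (erule that)
  then have N: "\<And>n k. nowhere_dense (N n k)" "\<And>n. M n \<subseteq> (\<Union>k. N n k)" by auto
  define N' where "N' j = N (fst (prod_decode j)) (snd (prod_decode j))" for j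
  have "\<forall>j. nowhere_dense (N' j)" using N(1) by (simp add: N'_def)
  moreover have "(\<Union>n. M n) \<subseteq> (\<Union>j. N' j)"
  proof
    fix x assume "x \<in> (\<Union>n. M n)"
    then obtain n k where "x \<in> N n k" using N(2) by blast
    then have "x \<in> N' (prod_encode (n,k))" by (simp add: N'_def)
    then show "x \<in> (\<Union>j. N' j)" by blast
  qed
  ultimately show ?thesis unfolding meager_def by blast
qed

lemma meager_Un: "meager A \<Longrightarrow> meager B \<Longrightarrow> meager (A \<union> B)"
proof -
  assume a: "meager A" "meager B"
  have "meager (\<Union>n::nat. if n = 0 then A else B)"
    using a by (intro meager_Union) simp
  moreover have "A \<union> B \<subseteq> (\<Union>n::nat. if n = 0 then A else B)"
  proof
    fix x assume "x \<in> A \<union> B"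
    then show "x \<in> (\<Union>n::nat. if n = 0 then A else B)"
    proof
      assume "x \<in> A" then show ?thesis by (intro UN_I[of 0]) auto
    next
      assume "x \<in> B" then show ?thesis by (intro UN_I[of 1]) auto
    qed
  qed
  ultimately show ?thesis by (rule meager_subset[rotated])
qed

lemma meager_countable: "countable A \<Longrightarrow> meager A"
proof -
  assume c: "countable A"
  show ?thesis
  proof (cases "A = {}")
    case True then show ?thesis unfolding meager_def nowhere_dense_def
      by (intro exI[of _ "\<lambda>n. {}"]) auto
  next
    case False
    have "A \<subseteq> (\<Union>n. {from_nat_into A n})"
      using from_nat_into_surj[OF c] by blast
    moreover have "\<forall>n. nowhere_dense {from_nat_into A n}"
      by (simp add: nowhere_dense_def)
    ultimately show ?thesis unfolding meager_def
      by (intro exI[of _ "\<lambda>n. {from_nat_into A n}"]) blast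
  qed
qed

lemma nd_closed: "closed F \<Longrightarrow> interior F = {} \<Longrightarrow> nowhere_dense F"
  by (simp add: nowhere_dense_def)

lemma not_meager_UNIV: "\<not> meager (UNIV :: real set)"
proof
  assume "meager (UNIV :: real set)"
  then obtain N :: "nat \<Rightarrow> real set" where N: "\<And>n. nowhere_dense (N n)" "UNIV \<subseteq> (\<Union>n. N n)"
    unfolding meager_def by blast
  define G where "G = range (\<lambda>n. - closure (N n))"
  have "(UNIV::real set) \<subseteq> closure (\<Inter>G)"
  proof (rule Baire)
    show "countable G" by (simp add: G_def)
    fix T assume "T \<in> G"
    then obtain n where T: "T = - closure (N n)" by (auto simp: G_def)
    have "open T" by (simp add: T open_Compl)
    moreover have "closure T = UNIV"
      using N(1)[of n] by (simp add: T closure_complement nowhere_dense_def)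
    ultimately show "openin (top_of_set UNIV) T \<and> UNIV \<subseteq> closure T" by simp
  qed simp
  then have "\<Inter>G \<noteq> {}" by auto
  then obtain x where "x \<in> \<Inter>G" by blast
  then have "\<forall>n. x \<notin> N n" by (auto simp: G_def dest: subsetD[OF closure_subset])
  then show False using N(2) by blast
qed


definition bpset :: "real set \<Rightarrow> bool" where
  "bpset A \<longleftrightarrow> (\<exists>U. open U \<and> meager ((A - U) \<union> (U - A)))"

lemma bpset_alt: "bpset A \<longleftrightarrow> (\<exists>U M. open U \<and> meager M \<and> A = (U - M) \<union> (M - U))"
proof
  assume "bpset A"
  then obtain U where "open U" "meager ((A - U) \<union> (U - A))" unfolding bpset_def by blast
  moreover have "A = (U - ((A - U) \<union> (U - A))) \<union> (((A - U) \<union> (U - A)) - U)" by blast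
  ultimately show "\<exists>U M. open U \<and> meager M \<and> A = (U - M) \<union> (M - U)" by blast
next
  assume "\<exists>U M. open U \<and> meager M \<and> A = (U - M) \<union> (M - U)"
  then obtain U M where "open U" "meager M" "A = (U - M) \<union> (M - U)" by blast
  moreover have "(A - U) \<union> (U - A) = M" using \<open>A = _\<close> by blast
  ultimately show "bpset A" unfolding bpset_def by auto
qed

lemma bp_iff: "has_baire_property f \<longleftrightarrow> (\<forall>V. open V \<longrightarrow> bpset (f -` V))"
  unfolding has_baire_property_def bpset_alt by blast

lemma bpset_open: "open A \<Longrightarrow> bpset A"
  unfolding bpset_def meager_def nowhere_dense_def
  by (intro exI[of _ A]) (auto intro: exI[of _ "\<lambda>n. {}"])

lemma nd_frontier_open: "open U \<Longrightarrow> nowhere_dense (closure U - U)"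
proof (rule nd_closed)
  assume "open U"
  then show "closed (closure U - U)" by (simp add: closed_Diff)
  show "interior (closure U - U) = {}"
  proof (rule ccontr)
    assume "interior (closure U - U) \<noteq> {}"
    then obtain x where x: "x \<in> interior (closure U - U)" by blast
    let ?I = "interior (closure U - U)"
    have "open ?I" by simp
    have "?I \<inter> U = {}" using interior_subset by blast
    then have "?I \<inter> closure U = {}" using open_Int_closure_eq_empty[of ?I U] by simp
    then show False using x interior_subset by blast
  qed
qed

lemma bpset_compl: "bpset A \<Longrightarrow> bpset (- A)"
proof -
  assume "bpset A"
  then obtain U where U: "open U" "meager ((A - U) \<union> (U - A))" unfolding bpset_def by blast
  have m: "meager (((A - U) \<union> (U - A)) \<union> (closure U - U))"
    using U nd_frontier_open[OF U(1)]
    by (intro meager_Un) (auto simp: meager_def intro: exI[of _ "\<lambda>n. closure U - U"])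
  have "(- A - (- closure U)) \<union> ((- closure U) - (- A)) \<subseteq> ((A - U) \<union> (U - A)) \<union> (closure U - U)"
    using closure_subset[of U] by blast
  then have "meager ((- A - (- closure U)) \<union> ((- closure U) - (- A)))"
    using m by (rule meager_subset)
  moreover have "open (- closure U)" by (simp add: open_Compl)
  ultimately show ?thesis unfolding bpset_def by blast
qed

lemma bpset_Union: "(\<And>n::nat. bpset (A n)) \<Longrightarrow> bpset (\<Union>n. A n)"
proof -
  assume "\<And>n::nat. bpset (A n)"
  then have "\<forall>n. \<exists>U. open U \<and> meager ((A n - U) \<union> (U - A n))" unfolding bpset_def by blast
  from choice[OF this] obtain U :: "nat \<Rightarrow> real set" where
    U: "\<forall>n. open (U n) \<and> meager ((A n - U n) \<union> (U n - A n))"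
    by (elim exE) (erule that)
  have "open (\<Union>n. U n)" using U by auto
  moreover have "meager (\<Union>n. (A n - U n) \<union> (U n - A n))" using U by (intro meager_Union) simp
  then have "meager (((\<Union>n. A n) - (\<Union>n. U n)) \<union> ((\<Union>n. U n) - (\<Union>n. A n)))"
    by (rule meager_subset[rotated]) blast
  ultimately show ?thesis unfolding bpset_def by blast
qed

lemma bpset_Inter: "(\<And>n::nat. bpset (A n)) \<Longrightarrow> bpset (\<Inter>n. A n)"
proof -
  assume a: "\<And>n::nat. bpset (A n)"
  have "bpset (- (\<Union>n. - A n))" using a by (intro bpset_compl bpset_Union) simp
  moreover have "- (\<Union>n. - A n) = (\<Inter>n. A n)" by blast
  ultimately show ?thesis by simp
qed


lemma bp_limit:
  fixes g :: "nat \<Rightarrow> real \<Rightarrow> real"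
  assumes bp: "\<And>n. has_baire_property (g n)"
    and lim: "\<And>x. (\<lambda>n. g n x) \<longlonglongrightarrow> f x"
  shows "has_baire_property f"
  unfolding bp_iff
proof (intro allI impI)
  fix V :: "real set" assume V: "open V"
  define F where "F k = {y. ball y (inverse (real (Suc k))) \<subseteq> V}" for k
  have Fc: "closed (F k)" for k
  proof -
    have "F k = (\<Inter>z\<in>-V. - ball z (inverse (real (Suc k))))"
      unfolding F_def by (auto simp: dist_commute)
    then show ?thesis by (auto intro!: closed_INT)
  qed
  have bF: "bpset (g n -` F k)" for n k
  proof -
    have "bpset (- (g n -` (- F k)))"
      using bp[of n] Fc[of k] unfolding bp_iff by (auto intro!: bpset_compl simp: closed_def)
    then show ?thesis by (simp add: vimage_Compl)
  qed
  have eq: "f -` V = (\<Union>k. \<Union>N. \<Inter>n. (if N \<le> n then g n -` F k else UNIV))"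
  proof (intro equalityI subsetI)
    fix x assume "x \<in> f -` V"
    then have fx: "f x \<in> V" by simp
    obtain e where e: "e > 0" "ball (f x) e \<subseteq> V"
      by (rule openE[OF V fx])
    obtain k where k: "inverse (real (Suc k)) < e / 2"
      using reals_Archimedean[of "e/2"] e by auto
    have pos: "inverse (real (Suc k)) > 0" by simp
    have "\<exists>N. \<forall>n\<ge>N. dist (g n x) (f x) < inverse (real (Suc k))"
      using lim[of x] pos unfolding lim_sequentially by blast
    then obtain N where N: "\<And>n. n \<ge> N \<Longrightarrow> dist (g n x) (f x) < inverse (real (Suc k))"
      by blast
    have gF: "g n x \<in> F k" if "N \<le> n" for n
    proof -
      have "ball (g n x) (inverse (real (Suc k))) \<subseteq> ball (f x) e"
      proof
        fix z assume z: "z \<in> ball (g n x) (inverse (real (Suc k)))"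
        have "dist (f x) z \<le> dist (f x) (g n x) + dist (g n x) z" by (rule dist_triangle)
        then show "z \<in> ball (f x) e" using z N[OF that] k by (simp add: dist_commute)
      qed
      then show ?thesis using e unfolding F_def by auto
    qed
    have "x \<in> (\<Inter>n. (if N \<le> n then g n -` F k else UNIV))"
    proof
      fix n show "x \<in> (if N \<le> n then g n -` F k else UNIV)"
        using gF[of n] by (cases "N \<le> n") simp_all
    qed
    then show "x \<in> (\<Union>k. \<Union>N. \<Inter>n. (if N \<le> n then g n -` F k else UNIV))" by blast
  next
    fix x assume "x \<in> (\<Union>k. \<Union>N. \<Inter>n. (if N \<le> n then g n -` F k else UNIV))"
    then obtain k N where kN0: "x \<in> (\<Inter>n. (if N \<le> n then g n -` F k else UNIV))" by blast
    have kN: "g n x \<in> F k" if "N \<le> n" for n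
    proof -
      have "x \<in> (if N \<le> n then g n -` F k else UNIV)" using kN0 by (rule INT_D) simp
      then show ?thesis using that by simp
    qed
    have pos: "inverse (real (Suc k)) > 0" by simp
    have "\<exists>N. \<forall>n\<ge>N. dist (g n x) (f x) < inverse (real (Suc k))"
      using lim[of x] pos unfolding lim_sequentially by blast
    then obtain N' where N': "\<And>n. n \<ge> N' \<Longrightarrow> dist (g n x) (f x) < inverse (real (Suc k))"
      by blast
    have "f x \<in> ball (g (max N N') x) (inverse (real (Suc k)))"
      using N'[of "max N N'"] by (simp add: dist_commute)
    moreover have "g (max N N') x \<in> F k" using kN by simp
    ultimately have "f x \<in> V" unfolding F_def by blast
    then show "x \<in> f -` V" by simp
  qed
  have "bpset (\<Union>k. \<Union>N. \<Inter>n. (if N \<le> n then g n -` F k else UNIV))"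
    by (intro bpset_Union bpset_Inter) (simp add: bF bpset_open)
  then show "bpset (f -` V)" using eq by simp
qed


lemma sw_cont_point:
  assumes sw: "swiatkowski g" and ab: "a < b"
  shows "\<exists>c\<in>{a<..<b}. isCont g c"
proof (rule ccontr)
  assume no: "\<not> (\<exists>c\<in>{a<..<b}. isCont g c)"
  have const: "g x = g y" if "x \<in> {a<..<b}" "y \<in> {a<..<b}" for x y
  proof (rule ccontr)
    assume ne: "g x \<noteq> g y"
    show False
    proof (cases "x < y")
      case True
      then obtain c where "c \<in> {x<..<y} \<inter> continuity_points g"
        using sw ne unfolding swiatkowski_def by blast
      then show False using no that by (auto simp: continuity_points_def)
    next
      case False
      then have "y < x" using ne by (cases "x = y") auto
      from sw have "y < x \<and> g y \<noteq> g x \<longrightarrow> (\<exists>c \<in> {y<..<x} \<inter> continuity_points g.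
            min (g y) (g x) < g c \<and> g c < max (g y) (g x))"
        unfolding swiatkowski_def by blast
      then obtain c where "c \<in> {y<..<x} \<inter> continuity_points g"
        using \<open>y < x\<close> ne by auto
      then show False using no that by (auto simp: continuity_points_def)
    qed
  qed
  define m where "m = (a + b) / 2"
  have m: "m \<in> {a<..<b}" using ab by (simp add: m_def)
  have "eventually (\<lambda>x. x \<in> {a<..<b}) (at m)"
    by (rule eventually_at_in_open') (use m in auto)
  then have "eventually (\<lambda>x. g x = g m) (at m)"
    by (rule eventually_mono) (use m const in blast)
  then have "isCont g m" unfolding isCont_def by (rule tendsto_eventually)
  then show False using no m by blast
qed

lemma sw_bp:
  assumes sw: "swiatkowski g"
  shows "has_baire_property g"
proof -
  define Ok where "Ok k = {x. \<exists>d>0. \<forall>y\<in>ball x d. \<forall>z\<in>ball x d. \<bar>g y - g z\<bar> < inverse (real (Suc k))}" for k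
  have contO: "x \<in> Ok k" if "isCont g x" for x k
  proof -
    have "\<exists>d>0. \<forall>y. dist y x < d \<longrightarrow> dist (g y) (g x) < inverse (real (Suc k)) / 2"
    proof -
      have pos: "inverse (real (Suc k)) / 2 > 0" by simp
      show ?thesis using that pos unfolding continuous_at_eps_delta by blast
    qed
    then obtain d where d: "d > 0" "\<And>y. dist y x < d \<Longrightarrow> dist (g y) (g x) < inverse (real (Suc k)) / 2"
      by blast
    have "\<bar>g y - g z\<bar> < inverse (real (Suc k))" if "y \<in> ball x d" "z \<in> ball x d" for y z
      using d(2)[of y] d(2)[of z] that by (simp add: dist_commute dist_real_def) (smt (verit))
    then show ?thesis using d(1) unfolding Ok_def by blast
  qed
  have openO: "open (Ok k)" for k
    unfolding open_contains_ball
  proof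
    fix x assume "x \<in> Ok k"
    then obtain d where d: "d > 0" "\<forall>y\<in>ball x d. \<forall>z\<in>ball x d. \<bar>g y - g z\<bar> < inverse (real (Suc k))"
      unfolding Ok_def by blast
    have "ball x (d/2) \<subseteq> Ok k"
    proof
      fix x' assume x': "x' \<in> ball x (d/2)"
      have "ball x' (d/2) \<subseteq> ball x d"
      proof
        fix y assume "y \<in> ball x' (d/2)"
        then show "y \<in> ball x d" using x' dist_triangle[of x y x'] by auto
      qed
      then show "x' \<in> Ok k" using d unfolding Ok_def
        by (intro CollectI exI[of _ "d/2"]) auto
    qed
    then show "\<exists>e>0. ball x e \<subseteq> Ok k" using d(1) by (intro exI[of _ "d/2"]) auto
  qed
  have ndO: "nowhere_dense (- Ok k)" for k
  proof (rule nd_closed)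
    show "closed (- Ok k)" using openO by (simp add: closed_Compl)
    show "interior (- Ok k) = {}"
    proof (rule ccontr)
      assume "interior (- Ok k) \<noteq> {}"
      then obtain x where "x \<in> interior (- Ok k)" by blast
      then obtain e where e: "e > 0" "ball x e \<subseteq> - Ok k"
        by (meson open_contains_ball open_interior interior_subset subset_trans)
      obtain c where c: "c \<in> {x - e<..<x + e}" "isCont g c"
        using sw_cont_point[OF sw, of "x - e" "x + e"] e(1) by auto
      have "c \<in> ball x e" using c(1) by (auto simp: dist_real_def)
      then show False using contO[OF c(2)] e(2) by blast
    qed
  qed
  have inter: "isCont g x" if xin: "\<forall>k. x \<in> Ok k" for x
    unfolding continuous_at_eps_delta
  proof (intro allI impI)
    fix \<epsilon> :: real assume "\<epsilon> > 0"
    then obtain k where k: "inverse (real (Suc k)) < \<epsilon>" using reals_Archimedean by blast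
    obtain d where d: "d > 0" "\<forall>y\<in>ball x d. \<forall>z\<in>ball x d. \<bar>g y - g z\<bar> < inverse (real (Suc k))"
      using xin[rule_format, of k] unfolding Ok_def by blast
    have "\<forall>x'. dist x' x < d \<longrightarrow> dist (g x') (g x) < \<epsilon>"
    proof (intro allI impI)
      fix x' assume "dist x' x < d"
      then have "\<bar>g x' - g x\<bar> < inverse (real (Suc k))" using d by (simp add: dist_commute)
      then show "dist (g x') (g x) < \<epsilon>" using k by (simp add: dist_real_def)
    qed
    then show "\<exists>\<delta>>0. \<forall>x'. dist x' x < \<delta> \<longrightarrow> dist (g x') (g x) < \<epsilon>" using d(1) by blast
  qed
  have mC: "meager (- continuity_points g)"
  proof (rule meager_subset)
    show "- continuity_points g \<subseteq> (\<Union>k. - Ok k)"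
      using inter by (auto simp: continuity_points_def)
    show "meager (\<Union>k. - Ok k)" unfolding meager_def using ndO
      by (intro exI[of _ "\<lambda>k. - Ok k"]) simp
  qed
  show ?thesis unfolding has_baire_property_def
  proof (intro allI impI)
    fix V :: "real set" assume V: "open V"
    define U where "U = interior (g -` V)"
    define M where "M = g -` V - U"
    have "M \<subseteq> - continuity_points g"
    proof
      fix x assume xM: "x \<in> M"
      show "x \<in> - continuity_points g"
      proof
        assume "x \<in> continuity_points g"
        then have "isCont g x" by (simp add: continuity_points_def)
        then obtain S where S: "open S" "x \<in> S" "\<forall>x'\<in>S. g x' \<in> V"
          using xM V unfolding continuous_at_open M_def by blast
        then have "x \<in> U" unfolding U_def by (intro interiorI[of S]) auto
        then show False using xM M_def by blast
      qed
    qed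
    then have "meager M" using mC by (rule meager_subset)
    moreover have "g -` V = (U - M) \<union> (M - U)"
      using interior_subset[of "g -` V"] unfolding M_def U_def by blast
    moreover have "open U" by (simp add: U_def)
    ultimately show "\<exists>U M. open U \<and> meager M \<and> g -` V = U - M \<union> (M - U)" by blast
  qed
qed


lemma plim_bp: "pointwise_limit_of_swiatkowski h \<Longrightarrow> has_baire_property h"
  unfolding pointwise_limit_of_swiatkowski_def
  using bp_limit sw_bp by blast

lemma f_bp:
  fixes Q1 :: "real set" and f :: "real \<Rightarrow> real"
  assumes fdef: "\<And>x. f x = (if x \<notin> \<rat> then 0 else if x \<in> Q1 then 1 else 2)"
  shows "has_baire_property f"
  unfolding has_baire_property_def
proof (intro allI impI)
  fix V :: "real set" assume "open V"
  have mQ: "meager \<rat>" by (rule meager_countable) (rule countable_rat)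
  show "\<exists>U M. open U \<and> meager M \<and> f -` V = U - M \<union> (M - U)"
  proof (cases "0 \<in> V")
    case True
    have sub: "- (f -` V) \<subseteq> \<rat>"
    proof
      fix x assume "x \<in> - (f -` V)"
      then have "f x \<notin> V" by simp
      then show "x \<in> \<rat>" using True fdef[of x] by (cases "x \<in> \<rat>") auto
    qed
    have "meager (- (f -` V))" using sub mQ by (rule meager_subset)
    moreover have "f -` V = UNIV - (- (f -` V)) \<union> ((- (f -` V)) - UNIV)" by blast
    ultimately show ?thesis by (intro exI[of _ UNIV] exI[of _ "- (f -` V)"]) auto
  next
    case False
    have sub: "f -` V \<subseteq> \<rat>"
    proof
      fix x assume "x \<in> f -` V"
      then have "f x \<in> V" by simp
      then show "x \<in> \<rat>" using False fdef[of x] by (cases "x \<in> \<rat>") auto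
    qed
    have "meager (f -` V)" using sub mQ by (rule meager_subset)
    moreover have "f -` V = {} - (f -` V) \<union> ((f -` V) - {})" by blast
    ultimately show ?thesis by (intro exI[of _ "{}"] exI[of _ "f -` V"]) auto
  qed
qed

lemma dense_meets:
  assumes "closure S = UNIV" "open T" "T \<noteq> {}"
  shows "\<exists>x. x \<in> S \<and> x \<in> T"
  using open_Int_closure_eq_empty[OF assms(2), of S] assms by auto

lemma f_not_plim:
  fixes Q1 Q2 :: "real set" and f :: "real \<Rightarrow> real"
  assumes "Q1 \<union> Q2 = \<rat>" and "Q1 \<inter> Q2 = {}"
    and c1: "closure Q1 = UNIV" and c2: "closure Q2 = UNIV"
    and fdef: "\<And>x. f x = (if x \<notin> \<rat> then 0 else if x \<in> Q1 then 1 else 2)"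
  shows "\<not> pointwise_limit_of_swiatkowski f"
proof
  assume "pointwise_limit_of_swiatkowski f"
  then obtain g :: "nat \<Rightarrow> real \<Rightarrow> real" where sw: "\<And>n. swiatkowski (g n)"
    and lim: "\<And>x. (\<lambda>n. g n x) \<longlonglongrightarrow> f x"
    unfolding pointwise_limit_of_swiatkowski_def by blast
  define A where "A N = {x. \<forall>m\<ge>N. g m x < 1/2}" for N
  have irr: "- \<rat> \<subseteq> (\<Union>N. A N)"
  proof
    fix x :: real assume "x \<in> - \<rat>"
    then have fx0: "f x = 0" using fdef by simp
    have h: "(1/2::real) > 0" by simp
    have "\<exists>N. \<forall>m\<ge>N. dist (g m x) (f x) < 1/2" using lim[of x] h unfolding lim_sequentially
      by blast
    then have "\<exists>N. \<forall>m\<ge>N. dist (g m x) 0 < 1/2" by (simp only: fx0)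
    then obtain N where "\<forall>m\<ge>N. dist (g m x) 0 < 1/2" by blast
    then have "x \<in> A N" unfolding A_def by (auto simp: dist_real_def)
    then show "x \<in> (\<Union>N. A N)" by blast
  qed
  have "\<exists>N. \<not> nowhere_dense (A N)"
  proof (rule ccontr)
    assume "\<not> (\<exists>N. \<not> nowhere_dense (A N))"
    then have "meager (\<Union>N. A N)" unfolding meager_def by (intro exI[of _ A]) auto
    moreover have "meager \<rat>" by (rule meager_countable) (rule countable_rat)
    ultimately have "meager ((\<Union>N. A N) \<union> \<rat>)" by (rule meager_Un)
    moreover have "UNIV \<subseteq> (\<Union>N. A N) \<union> \<rat>" using irr by blast
    ultimately have "meager (UNIV :: real set)" by (rule meager_subset[rotated])
    then show False using not_meager_UNIV by blast
  qed
  then obtain N where "interior (closure (A N)) \<noteq> {}" unfolding nowhere_dense_def by blast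
  then obtain x0 where "x0 \<in> interior (closure (A N))" by blast
  then obtain e where e: "e > 0" "ball x0 e \<subseteq> closure (A N)"
    by (meson open_contains_ball open_interior interior_subset subset_trans)
  obtain q1 where q1: "q1 \<in> Q1" "q1 \<in> ball x0 e"
    using dense_meets[OF c1, of "ball x0 e"] e(1) by auto
  obtain q2 where q2: "q2 \<in> Q2" "q2 \<in> ball x0 e"
    using dense_meets[OF c2, of "ball x0 e"] e(1) by auto
  have fq1: "f q1 = 1" using q1 assms(1) fdef[of q1] by auto
  have fq2: "f q2 = 2" using q2 assms(1,2) fdef[of q2] by auto
  have ev1: "eventually (\<lambda>m. dist (g m q1) 1 < 1/10) sequentially"
    using lim[of q1] unfolding fq1 by (rule tendstoD) simp
  have ev2: "eventually (\<lambda>m. dist (g m q2) 2 < 1/10) sequentially"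
    using lim[of q2] unfolding fq2 by (rule tendstoD) simp
  have "eventually (\<lambda>m. N \<le> m \<and> dist (g m q1) 1 < 1/10 \<and> dist (g m q2) 2 < 1/10) sequentially"
    using ev1 ev2 eventually_ge_at_top[of N] by eventually_elim auto
  then obtain m where m: "N \<le> m" "dist (g m q1) 1 < 1/10" "dist (g m q2) 2 < 1/10"
    unfolding eventually_sequentially by blast
  have "\<bar>g m q1 - 1\<bar> < 1/10" using m(2) by (simp only: dist_real_def)
  then have "- (1/10) < g m q1 - 1 \<and> g m q1 - 1 < 1/10" by (simp only: abs_less_iff) simp
  then have g1: "g m q1 > 9/10" "g m q1 < 11/10" by linarith+
  have "\<bar>g m q2 - 2\<bar> < 1/10" using m(3) by (simp only: dist_real_def)
  then have "- (1/10) < g m q2 - 2 \<and> g m q2 - 2 < 1/10" by (simp only: abs_less_iff) simp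
  then have g2: "g m q2 > 19/10" by linarith
  have neq: "g m q1 \<noteq> g m q2" using g1 g2 by simp
  then have qne: "q1 \<noteq> q2" by auto
  define a where "a = min q1 q2"
  define b where "b = max q1 q2"
  have ab: "a < b" using qne by (auto simp: a_def b_def)
  have gab: "g m a \<noteq> g m b" using neq by (auto simp: a_def b_def min_def max_def)
  have "min (g m a) (g m b) > 9/10" using g1 g2 by (auto simp: a_def b_def min_def max_def)
  have "\<exists>x \<in> {a<..<b} \<inter> continuity_points (g m).
            min (g m a) (g m b) < g m x \<and> g m x < max (g m a) (g m b)"
    using sw[of m, unfolded swiatkowski_def, rule_format, of a b] ab gab by simp
  then obtain c where c: "c \<in> {a<..<b}" "isCont (g m) c" "min (g m a) (g m b) < g m c"
    unfolding continuity_points_def by blast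
  have gc: "g m c > 9/10" using c(3) \<open>min (g m a) (g m b) > 9/10\<close> by linarith
  have cin: "c \<in> ball x0 e"
  proof -
    have "a \<in> ball x0 e" "b \<in> ball x0 e" using q1 q2 by (auto simp: a_def b_def min_def max_def)
    then show ?thesis using c(1) by (auto simp: dist_real_def)
  qed
  have "\<exists>d>0. \<forall>y. dist y c < d \<longrightarrow> dist (g m y) (g m c) < 2/5"
  proof -
    have "(2/5::real) > 0" by simp
    then show ?thesis using c(2) unfolding continuous_at_eps_delta by blast
  qed
  then obtain d where d: "d > 0" "\<And>y. dist y c < d \<Longrightarrow> dist (g m y) (g m c) < 2/5" by blast
  define r where "r = min d (e - dist x0 c)"
  have r: "r > 0" using d(1) cin by (simp add: r_def)
  have "ball c r \<subseteq> ball x0 e"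
  proof
    fix y assume "y \<in> ball c r"
    then show "y \<in> ball x0 e" using dist_triangle[of x0 y c] by (auto simp: r_def)
  qed
  then have "ball c r \<subseteq> closure (A N)" using e(2) by blast
  moreover have "c \<in> ball c r" using r by simp
  ultimately have "ball c r \<inter> closure (A N) \<noteq> {}" by blast
  then have "ball c r \<inter> A N \<noteq> {}" using open_Int_closure_eq_empty[of "ball c r" "A N"] by simp
  then obtain y where y: "y \<in> A N" "y \<in> ball c r" by blast
  have "g m y < 1/2" using y(1) m(1) unfolding A_def by auto
  moreover have "dist (g m y) (g m c) < 2/5" using y(2) d(2)[of y] by (auto simp: r_def dist_commute)
  ultimately show False using gc by (auto simp: dist_real_def)
qed

theorem mainTheorem8:
  fixes Q1 Q2 :: "real set" and f :: "real \<Rightarrow> real"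
  assumes "Q1 \<union> Q2 = \<rat>" and "Q1 \<inter> Q2 = {}"
    and "closure Q1 = UNIV" and "closure Q2 = UNIV"
    and "\<And>x. f x = (if x \<notin> \<rat> then 0 else if x \<in> Q1 then 1 else 2)"
  shows "has_baire_property f \<and> \<not> pointwise_limit_of_swiatkowski f \<and>
         {h. pointwise_limit_of_swiatkowski h} \<subset> {h. has_baire_property h}"
proof -
  have 1: "has_baire_property f" using f_bp assms(5) by blast
  have 2: "\<not> pointwise_limit_of_swiatkowski f" using f_not_plim[OF assms] .
  have "{h. pointwise_limit_of_swiatkowski h} \<subseteq> {h. has_baire_property h}"
    using plim_bp by blast
  then have 3: "{h. pointwise_limit_of_swiatkowski h} \<subset> {h. has_baire_property h}"
    using 1 2 by blast
  show ?thesis using 1 2 3 by blast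
qed

end
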